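(* Let $(\mathcal S,\mathcal A,H,P,R,\mu)$ be an episodic tabular MDP as in the context. Suppose the actions do not affect the transitions, i.e., $P_h(s'\mid s,a)=P_h(s'\mid s)$ for all $h,s,a,s'$. Then $CR^L(P)=\frac1A$ for every $L\in[H]$.
   Context: Episodic tabular MDP $(\mathcal S,\mathcal A,H,P,R,\mu)$: finite state space $\mathcal S$ with $|\mathcal S|=S$, finite action space $\mathcal A$ with $|\mathcal A|=A$, horizon $H\in\mathbb N$, transition kernels $P_h(\cdot\mid s,a)$, initial state distribution $\mu$, and random non-negative rewards $R_h(s,a)$ for $(h,s,a)\in\mathcal X:=[H]\times\mathcal S\times\mathcal A$. Initially $s_1\sim\mu$; at step $h$ the agent in state $s_h$ picks $a_h$, receives $R_h(s_h,a_h)$ and moves to $s_{h+1}\sim P_h(\cdot\mid s_h,a_h)$. All rewards are drawn before the interaction. The vectors $\mathcal R_h=\{R_h(s,a)\}_{s,a}$ for different $h$ are mutually independent (entries of one $\mathcal R_h$ may be arbitrarily correlated); rewards are independent of transitions, and transitions are independent across steps. Let $r_h(s,a)=\mathbb E[R_h(s,a)]$ and let $\mathcal D(r)$ denote the set of all such reward distributions with means $r$. For $L\in\{0,\dots,H\}$ an $L$-lookahead policy draws $a_h\sim\pi_h(\cdot\mid s_h,\mathcal R_h^L)$, where $\mathcal R_h^L=(\mathcal R_t)_{h\le t\le\min(h+L-1,H)}$ and $\mathcal R_h^0=\emptyset$; $\Pi^L$ is the set of these policies. The value is $V^{L,\pi}(P,r)=\mathbb E[\sum_{h=1}^H R_h(s_h,a_h)]$,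 and $V^{L,*}(P,r)=\sup_{\pi\in\Pi^L}V^{L,\pi}(P,r)$. The competitive ratio is $CR^L(P,r)=\inf_{\mathcal D(r)}V^{0,*}(P,r)/V^{L,*}(P,r)$, with the convention that any division by zero equals $+\infty$. Also $CR^L(P)=\inf\{CR^L(P,r): r_h\in[0,1]^{SA}\ \forall h\}$. *)

theory Defs
  imports "HOL-Probability.Probability"
begin

text \<open>Steps are indexed by h in {1..H}. A reward vector for one step is a function
  ('s \<times> 'a \<Rightarrow> real); its distribution is a probability measure on the
  product measurable space rew_space. The full reward realisation is
  omega :: nat \<Rightarrow> ('s \<times> 'a \<Rightarrow> real), drawn from the product of the per-step
  distributions (independence across steps, arbitrary correlation within a step).\<close>

definition rew_space :: "('s \<times> 'a \<Rightarrow> real) measure" where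
  "rew_space = PiM UNIV (\<lambda>_. borel)"

definition win :: "nat \<Rightarrow> nat \<Rightarrow> nat \<Rightarrow> nat set" where
  "win L H h = {h..<h+L} \<inter> {1..H}"

definition reward_dists ::
  "nat \<Rightarrow> (nat \<Rightarrow> 's \<times> 'a \<Rightarrow> real) \<Rightarrow> (nat \<Rightarrow> ('s \<times> 'a \<Rightarrow> real) measure) set" where
  "reward_dists H r = {D. \<forall>h\<in>{1..H}.
      prob_space (D h) \<and> sets (D h) = sets rew_space \<and>
      (AE \<rho> in D h. \<forall>x. 0 \<le> \<rho> x) \<and>
      (\<forall>x. integrable (D h) (\<lambda>\<rho>. \<rho> x) \<and> (\<integral>\<rho>. \<rho> x \<partial>D h) = r h x)}"

text \<open>An L-lookahead (randomised, Markov) policy: pi h s w a is the probability of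
  choosing action a at step h in state s when the observed lookahead rewards are w
  (w is the reward realisation restricted to the window win L H h).\<close>
type_synonym ('s, 'a) policy = "nat \<Rightarrow> 's \<Rightarrow> (nat \<Rightarrow> 's \<times> 'a \<Rightarrow> real) \<Rightarrow> 'a \<Rightarrow> real"

definition is_policy :: "nat \<Rightarrow> nat \<Rightarrow> ('s, 'a::finite) policy \<Rightarrow> bool" where
  "is_policy L H \<pi> \<longleftrightarrow> (\<forall>h\<in>{1..H}. \<forall>s.
      (\<forall>w a. 0 \<le> \<pi> h s w a) \<and> (\<forall>w. (\<Sum>a\<in>UNIV. \<pi> h s w a) = 1) \<and>
      (\<forall>a. (\<lambda>w. \<pi> h s w a) \<in> borel_measurable (PiM (win L H h) (\<lambda>_. rew_space))))"

text \<open>Given the full reward realisation omega, sdist k is the state distribution at step k+1.\<close>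
primrec sdist :: "nat \<Rightarrow> nat \<Rightarrow> ('s::finite \<Rightarrow> real) \<Rightarrow> (nat \<Rightarrow> 's \<Rightarrow> 'a::finite \<Rightarrow> 's \<Rightarrow> real)
    \<Rightarrow> ('s, 'a) policy \<Rightarrow> (nat \<Rightarrow> 's \<times> 'a \<Rightarrow> real) \<Rightarrow> nat \<Rightarrow> 's \<Rightarrow> real" where
  "sdist L H \<mu> P \<pi> \<omega> 0 = \<mu>"
| "sdist L H \<mu> P \<pi> \<omega> (Suc k) = (\<lambda>s'. \<Sum>s\<in>UNIV. \<Sum>a\<in>UNIV.
      sdist L H \<mu> P \<pi> \<omega> k s * \<pi> (Suc k) s (restrict \<omega> (win L H (Suc k))) a * P (Suc k) s a s')"

definition cond_value :: "nat \<Rightarrow> nat \<Rightarrow> ('s::finite \<Rightarrow> real) \<Rightarrow> (nat \<Rightarrow> 's \<Rightarrow> 'a::finite \<Rightarrow> 's \<Rightarrow> real)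
    \<Rightarrow> ('s, 'a) policy \<Rightarrow> (nat \<Rightarrow> 's \<times> 'a \<Rightarrow> real) \<Rightarrow> real" where
  "cond_value L H \<mu> P \<pi> \<omega> = (\<Sum>h\<in>{1..H}. \<Sum>s\<in>UNIV. \<Sum>a\<in>UNIV.
      sdist L H \<mu> P \<pi> \<omega> (h - 1) s * \<pi> h s (restrict \<omega> (win L H h)) a * \<omega> h (s, a))"

definition policy_value :: "nat \<Rightarrow> nat \<Rightarrow> ('s::finite \<Rightarrow> real) \<Rightarrow> (nat \<Rightarrow> 's \<Rightarrow> 'a::finite \<Rightarrow> 's \<Rightarrow> real)
    \<Rightarrow> (nat \<Rightarrow> ('s \<times> 'a \<Rightarrow> real) measure) \<Rightarrow> ('s, 'a) policy \<Rightarrow> real" where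
  "policy_value L H \<mu> P D \<pi> = (\<integral>\<omega>. cond_value L H \<mu> P \<pi> \<omega> \<partial>(PiM {1..H} D))"

definition opt_value :: "nat \<Rightarrow> nat \<Rightarrow> ('s::finite \<Rightarrow> real) \<Rightarrow> (nat \<Rightarrow> 's \<Rightarrow> 'a::finite \<Rightarrow> 's \<Rightarrow> real)
    \<Rightarrow> (nat \<Rightarrow> ('s \<times> 'a \<Rightarrow> real) measure) \<Rightarrow> ereal" where
  "opt_value L H \<mu> P D = (SUP \<pi>\<in>{\<pi>. is_policy L H \<pi>}. ereal (policy_value L H \<mu> P D \<pi>))"

definition cr_div :: "ereal \<Rightarrow> ereal \<Rightarrow> ereal" where
  "cr_div x y = (if y = 0 then \<infinity> else x / y)"

definition CR_r :: "nat \<Rightarrow> nat \<Rightarrow> ('s::finite \<Rightarrow> real) \<Rightarrow> (nat \<Rightarrow> 's \<Rightarrow> 'a::finite \<Rightarrow> 's \<Rightarrow> real)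
    \<Rightarrow> (nat \<Rightarrow> 's \<times> 'a \<Rightarrow> real) \<Rightarrow> ereal" where
  "CR_r L H \<mu> P r = (INF D\<in>reward_dists H r. cr_div (opt_value 0 H \<mu> P D) (opt_value L H \<mu> P D))"

definition CR :: "nat \<Rightarrow> nat \<Rightarrow> ('s::finite \<Rightarrow> real) \<Rightarrow> (nat \<Rightarrow> 's \<Rightarrow> 'a::finite \<Rightarrow> 's \<Rightarrow> real) \<Rightarrow> ereal" where
  "CR L H \<mu> P = (INF r\<in>{r. \<forall>h\<in>{1..H}. \<forall>x. 0 \<le> r h x \<and> r h x \<le> 1}. CR_r L H \<mu> P r)"

end

theory Submission
  imports Defs
begin

primrec qd :: "('s::finite \<Rightarrow> real) \<Rightarrow> (nat \<Rightarrow> 's \<Rightarrow> 'a::finite \<Rightarrow> 's \<Rightarrow> real) \<Rightarrow> nat \<Rightarrow> 's \<Rightarrow> real" where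
  "qd \<mu> P 0 = \<mu>"
| "qd \<mu> P (Suc k) = (\<lambda>s'. \<Sum>s\<in>UNIV. qd \<mu> P k s * P (Suc k) s undefined s')"

lemma sdist_eq:
  fixes \<mu> :: "'s::finite \<Rightarrow> real" and P :: "nat \<Rightarrow> 's \<Rightarrow> 'a::finite \<Rightarrow> 's \<Rightarrow> real"
  assumes ind: "\<forall>h\<in>{1..H}. \<forall>s a a' s'. P h s a s' = P h s a' s'"
    and pol: "is_policy L H \<pi>"
  shows "k < H \<Longrightarrow> sdist L H \<mu> P \<pi> \<omega> k = qd \<mu> P k"
proof (induction k)
  case 0 then show ?case by simp
next
  case (Suc k)
  have hk: "Suc k \<in> {1..H}" using Suc by auto
  define c where "c = (\<lambda>s s'. P (Suc k) s undefined s')"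
  have Pi: "P (Suc k) s a s' = c s s'" for s a s' using ind hk unfolding c_def by blast
  have s1: "(\<Sum>a\<in>UNIV. \<pi> (Suc k) s w a) = 1" for s w using pol hk unfolding is_policy_def by blast
  show ?case
  proof (rule ext)
    fix s'
    have "sdist L H \<mu> P \<pi> \<omega> (Suc k) s' = (\<Sum>s\<in>UNIV. \<Sum>a\<in>UNIV.
      qd \<mu> P k s * \<pi> (Suc k) s (restrict \<omega> (win L H (Suc k))) a * c s s')"
      using Suc(1)[OF Suc_lessD[OF Suc(2)]] Pi by simp
    also have "\<dots> = (\<Sum>s\<in>UNIV. qd \<mu> P k s * c s s' * (\<Sum>a\<in>UNIV. \<pi> (Suc k) s (restrict \<omega> (win L H (Suc k))) a))"
      by (simp add: sum_distrib_left sum_distrib_right mult_ac)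
    also have "\<dots> = qd \<mu> P (Suc k) s'" using s1 by (simp add: c_def)
    finally show "sdist L H \<mu> P \<pi> \<omega> (Suc k) s' = qd \<mu> P (Suc k) s'" .
  qed
qed

lemma qd_props:
  fixes \<mu> :: "'s::finite \<Rightarrow> real" and P :: "nat \<Rightarrow> 's \<Rightarrow> 'a::finite \<Rightarrow> 's \<Rightarrow> real"
  assumes mu_dist: "(\<forall>s. 0 \<le> \<mu> s) \<and> (\<Sum>s\<in>UNIV. \<mu> s) = 1"
    and P_dist: "\<forall>h\<in>{1..H}. \<forall>s a. (\<forall>s'. 0 \<le> P h s a s') \<and> (\<Sum>s'\<in>UNIV. P h s a s') = 1"
  shows "k < H \<Longrightarrow> (\<forall>s. 0 \<le> qd \<mu> P k s) \<and> (\<Sum>s\<in>UNIV. qd \<mu> P k s) = 1"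
proof (induction k)
  case 0 then show ?case using mu_dist by simp
next
  case (Suc k)
  have hk: "Suc k \<in> {1..H}" using Suc by auto
  have IH: "\<forall>s. 0 \<le> qd \<mu> P k s" "(\<Sum>s\<in>UNIV. qd \<mu> P k s) = 1" using Suc by auto
  have "(\<Sum>s'\<in>UNIV. qd \<mu> P (Suc k) s') = (\<Sum>s\<in>UNIV. qd \<mu> P k s * (\<Sum>s'\<in>UNIV. P (Suc k) s undefined s'))"
    by (simp add: sum_distrib_left) (rule sum.swap)
  also have "\<dots> = 1" using P_dist hk IH by simp
  moreover have "0 \<le> qd \<mu> P (Suc k) s" for s
    using IH P_dist hk by (simp add: sum_nonneg)
  ultimately show ?case by simp
qed


lemma rd_facts:
  assumes D: "D \<in> reward_dists H r" and h: "h \<in> {1..H}"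
  shows "prob_space (D h)" "sets (D h) = sets rew_space"
    "AE \<rho> in D h. \<forall>x. 0 \<le> \<rho> x" "integrable (D h) (\<lambda>\<rho>. \<rho> x)" "(\<integral>\<rho>. \<rho> x \<partial>D h) = r h x"
  using D h unfolding reward_dists_def by (auto simp del: split_paired_All)

lemma rd_meas_coord:
  assumes D: "D \<in> reward_dists H r" and h: "h \<in> {1..H}"
  shows "(\<lambda>\<rho>. \<rho> x) \<in> borel_measurable (D h)"
proof -
  have "(\<lambda>\<rho>. \<rho> x) \<in> borel_measurable rew_space"
    unfolding rew_space_def by (rule measurable_component_singleton) simp
  then show ?thesis using rd_facts(2)[OF D h] measurable_cong_sets by blast
qed

lemma rd_proj_meas:
  assumes D: "D \<in> reward_dists H r" and h: "h \<in> {1..H}"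
  shows "(\<lambda>\<omega>. \<omega> h x) \<in> borel_measurable (PiM {1..H} D)"
  using measurable_comp[OF measurable_component_singleton[OF h, of D] rd_meas_coord[OF D h]]
  by (simp add: comp_def)

lemma rd_PiM:
  assumes D: "D \<in> reward_dists H r" and h: "h \<in> {1..H}"
  shows "AE \<omega> in PiM {1..H} D. \<forall>x. 0 \<le> \<omega> h x"
    "integrable (PiM {1..H} D) (\<lambda>\<omega>. \<omega> h x)"
    "(\<integral>\<omega>. \<omega> h x \<partial>PiM {1..H} D) = r h x"
proof -
  have ps: "\<And>i. i \<in> {1..H} \<Longrightarrow> prob_space (D i)" using rd_facts(1)[OF D] by blast
  show "AE \<omega> in PiM {1..H} D. \<forall>x. 0 \<le> \<omega> h x"
    by (rule AE_PiM_component[of "{1..H}" D h, OF ps h rd_facts(3)[OF D h]])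
  have dc: "distr (PiM {1..H} D) (D h) (\<lambda>\<omega>. \<omega> h) = D h"
    by (rule distr_PiM_component[OF ps h])
  have m: "(\<lambda>\<omega>. \<omega> h) \<in> measurable (PiM {1..H} D) (D h)"
    by (rule measurable_component_singleton[OF h])
  show "integrable (PiM {1..H} D) (\<lambda>\<omega>. \<omega> h x)"
    using integrable_distr_eq[OF m rd_meas_coord[OF D h]] dc rd_facts(4)[OF D h] by simp
  show "(\<integral>\<omega>. \<omega> h x \<partial>PiM {1..H} D) = r h x"
    using integral_distr[OF m rd_meas_coord[OF D h]] dc rd_facts(5)[OF D h] by simp
qed

lemma cond_value_eq:
  fixes \<mu> :: "'s::finite \<Rightarrow> real" and P :: "nat \<Rightarrow> 's \<Rightarrow> 'a::finite \<Rightarrow> 's \<Rightarrow> real"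
  assumes ind: "\<forall>h\<in>{1..H}. \<forall>s a a' s'. P h s a s' = P h s a' s'"
    and pol: "is_policy L H \<pi>"
  shows "cond_value L H \<mu> P \<pi> \<omega> = (\<Sum>h\<in>{1..H}. \<Sum>s\<in>UNIV. \<Sum>a\<in>UNIV.
      qd \<mu> P (h - 1) s * \<pi> h s (restrict \<omega> (win L H h)) a * \<omega> h (s, a))"
  unfolding cond_value_def
proof (intro sum.cong refl)
  fix h s a assume "h \<in> {1..H}"
  then have "h - 1 < H" by auto
  then show "sdist L H \<mu> P \<pi> \<omega> (h - 1) s * \<pi> h s (restrict \<omega> (win L H h)) a * \<omega> h (s, a) =
    qd \<mu> P (h - 1) s * \<pi> h s (restrict \<omega> (win L H h)) a * \<omega> h (s, a)"
    using sdist_eq[OF ind pol] by simp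
qed



definition ev :: "'a \<Rightarrow> ('s \<times> 'a \<Rightarrow> real)" where
  "ev b = (\<lambda>x. if snd x = b then 1 else 0)"

definition D0 :: "nat \<Rightarrow> ('s \<times> 'a::finite \<Rightarrow> real) measure" where
  "D0 h = distr (measure_pmf (pmf_of_set (UNIV::'a set))) rew_space ev"

lemma space_rew: "space rew_space = UNIV"
  unfolding rew_space_def by (simp add: space_PiM)

lemma ev_meas: "ev \<in> measurable (measure_pmf (pmf_of_set (UNIV::'a::finite set))) rew_space"
  by (simp add: space_rew)

lemma D0_rd: "(D0 :: nat \<Rightarrow> ('s::finite \<times> 'a::finite \<Rightarrow> real) measure) \<in> reward_dists H (\<lambda>h x. 1 / real CARD('a))"
  unfolding reward_dists_def
proof (intro CollectI ballI conjI allI)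
  fix h :: nat and x :: "'s \<times> 'a"
  show "prob_space (D0 h :: ('s \<times> 'a \<Rightarrow> real) measure)" unfolding D0_def
    by (rule measure_pmf.prob_space_distr[OF ev_meas])
  show "sets (D0 h :: ('s \<times> 'a \<Rightarrow> real) measure) = sets rew_space" unfolding D0_def by simp
  have cm: "(\<lambda>\<rho>. \<rho> x) \<in> borel_measurable rew_space"
    unfolding rew_space_def by (rule measurable_component_singleton) simp
  have S: "{x \<in> space rew_space. \<forall>y. 0 \<le> x y} \<in> sets (rew_space :: ('s \<times> 'a \<Rightarrow> real) measure)"
  proof -
    have "Measurable.pred rew_space (\<lambda>x::'s \<times> 'a \<Rightarrow> real. \<forall>y\<in>UNIV. 0 \<le> x y)"
      unfolding rew_space_def by measurable
    then show ?thesis by (simp add: pred_def)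
  qed
  show "AE \<rho> in (D0 h :: ('s \<times> 'a \<Rightarrow> real) measure). \<forall>x. 0 \<le> \<rho> x" unfolding D0_def
    using AE_distr_iff[OF ev_meas S] by (simp add: ev_def)
  show "integrable (D0 h :: ('s \<times> 'a \<Rightarrow> real) measure) (\<lambda>\<rho>. \<rho> x)" unfolding D0_def
    by (subst integrable_distr_eq[OF ev_meas cm]) (rule integrable_measure_pmf_finite, simp)
  show "(\<integral>\<rho>. \<rho> x \<partial>(D0 h :: ('s \<times> 'a \<Rightarrow> real) measure)) = 1 / real CARD('a)" unfolding D0_def
    by (subst integral_distr[OF ev_meas cm]) (simp add: integral_pmf_of_set ev_def)
qed

context
  fixes \<mu> :: "'s::finite \<Rightarrow> real" and P :: "nat \<Rightarrow> 's \<Rightarrow> 'a::finite \<Rightarrow> 's \<Rightarrow> real" and H :: nat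
  assumes mu_dist: "(\<forall>s. 0 \<le> \<mu> s) \<and> (\<Sum>s\<in>UNIV. \<mu> s) = 1"
    and P_dist: "\<forall>h\<in>{1..H}. \<forall>s a. (\<forall>s'. 0 \<le> P h s a s') \<and> (\<Sum>s'\<in>UNIV. P h s a s') = 1"
    and ind: "\<forall>h\<in>{1..H}. \<forall>s a a' s'. P h s a s' = P h s a' s'"
begin

lemma qd_nn: "h \<in> {1..H} \<Longrightarrow> 0 \<le> qd \<mu> P (h - 1) s"
  using qd_props[OF mu_dist P_dist, of "h - 1"] by auto

lemma qd_sum: "h \<in> {1..H} \<Longrightarrow> (\<Sum>s\<in>UNIV. qd \<mu> P (h - 1) s) = 1"
  using qd_props[OF mu_dist P_dist, of "h - 1"] by auto

lemma integral_lin: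
  assumes D: "D \<in> reward_dists H r"
  shows "(\<integral>\<omega>. (\<Sum>h\<in>{1..H}. \<Sum>s\<in>UNIV. \<Sum>a\<in>UNIV. c h s a * \<omega> h (s, a)) \<partial>PiM {1..H} D)
     = (\<Sum>h\<in>{1..H}. \<Sum>s\<in>UNIV. \<Sum>a\<in>UNIV. c h s a * r h (s, a))"
    "integrable (PiM {1..H} D) (\<lambda>\<omega>. \<Sum>h\<in>{1..H}. \<Sum>s\<in>UNIV. \<Sum>a\<in>UNIV. c h s a * \<omega> h (s, a))"
proof -
  have I: "integrable (PiM {1..H} D) (\<lambda>\<omega>. c h s a * \<omega> h (s, a))" if "h \<in> {1..H}" for h s a
    using rd_PiM(2)[OF D that] by simp
  show "integrable (PiM {1..H} D) (\<lambda>\<omega>. \<Sum>h\<in>{1..H}. \<Sum>s\<in>UNIV. \<Sum>a\<in>UNIV. c h s a * \<omega> h (s, a))"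
    by (intro Bochner_Integration.integrable_sum I)
  have "(\<integral>\<omega>. (\<Sum>h\<in>{1..H}. \<Sum>s\<in>UNIV. \<Sum>a\<in>UNIV. c h s a * \<omega> h (s, a)) \<partial>PiM {1..H} D)
     = (\<Sum>h\<in>{1..H}. (\<integral>\<omega>. (\<Sum>s\<in>UNIV. \<Sum>a\<in>UNIV. c h s a * \<omega> h (s, a)) \<partial>PiM {1..H} D))"
    by (intro Bochner_Integration.integral_sum Bochner_Integration.integrable_sum I)
  also have "\<dots> = (\<Sum>h\<in>{1..H}. \<Sum>s\<in>UNIV. (\<integral>\<omega>. (\<Sum>a\<in>UNIV. c h s a * \<omega> h (s, a)) \<partial>PiM {1..H} D))"
    by (intro sum.cong refl Bochner_Integration.integral_sum Bochner_Integration.integrable_sum I)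
  also have "\<dots> = (\<Sum>h\<in>{1..H}. \<Sum>s\<in>UNIV. \<Sum>a\<in>UNIV. (\<integral>\<omega>. c h s a * \<omega> h (s, a) \<partial>PiM {1..H} D))"
    by (intro sum.cong refl Bochner_Integration.integral_sum Bochner_Integration.integrable_sum I)
  also have "\<dots> = (\<Sum>h\<in>{1..H}. \<Sum>s\<in>UNIV. \<Sum>a\<in>UNIV. c h s a * r h (s, a))"
    using rd_PiM(3)[OF D] by (intro sum.cong refl) simp
  finally show "(\<integral>\<omega>. (\<Sum>h\<in>{1..H}. \<Sum>s\<in>UNIV. \<Sum>a\<in>UNIV. c h s a * \<omega> h (s, a)) \<partial>PiM {1..H} D)
     = (\<Sum>h\<in>{1..H}. \<Sum>s\<in>UNIV. \<Sum>a\<in>UNIV. c h s a * r h (s, a))" .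
qed


lemma pi_le1:
  assumes pol: "is_policy L H \<pi>" and h: "h \<in> {1..H}"
  shows "\<pi> h s w a \<le> 1" "0 \<le> \<pi> h s w a"
proof -
  have nn: "\<forall>a. 0 \<le> \<pi> h s w a" and sm: "(\<Sum>a\<in>UNIV. \<pi> h s w a) = 1"
    using pol h unfolding is_policy_def by auto
  show "\<pi> h s w a \<le> 1" using member_le_sum[of a UNIV "\<pi> h s w"] nn sm by simp
  show "0 \<le> \<pi> h s w a" using nn by simp
qed

lemma part_a:
  assumes D: "D \<in> reward_dists H r" and rr: "\<forall>h\<in>{1..H}. \<forall>x. 0 \<le> r h x \<and> r h x \<le> 1"
  defines "M \<equiv> (\<Sum>h\<in>{1..H}. \<Sum>s\<in>UNIV. qd \<mu> P (h - 1) s * Max (range (\<lambda>a::'a. r h (s, a))))"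
  shows "0 \<le> M" "ereal M \<le> opt_value L' H \<mu> P D"
    "opt_value L H \<mu> P D \<le> ereal (real CARD('a) * M)"
proof -
  define m where "m h s = Max (range (\<lambda>a::'a. r h (s, a)))" for h s
  have mge: "r h (s, a) \<le> m h s" for h s a unfolding m_def by (rule Max_ge) auto
  have "\<forall>h s. \<exists>a. r h (s, a) = m h s"
  proof (intro allI)
    fix h s
    have "m h s \<in> range (\<lambda>a::'a. r h (s, a))" unfolding m_def by (rule Max_in) auto
    then show "\<exists>a. r h (s, a) = m h s" by auto
  qed
  then obtain amax where amax: "\<And>h s. r h (s, amax h s) = m h s" by metis
  have M_def': "M = (\<Sum>h\<in>{1..H}. \<Sum>s\<in>UNIV. qd \<mu> P (h - 1) s * m h s)"
    unfolding M_def m_def by simp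
  have m_nn: "0 \<le> m h s" if h: "h \<in> {1..H}" for h s
  proof -
    have "0 \<le> r h (s, undefined)" using rr h by blast
    then show ?thesis using mge[of h s undefined] by linarith
  qed
  show M_nn: "0 \<le> M" unfolding M_def'
    by (intro sum_nonneg mult_nonneg_nonneg qd_nn m_nn)
  define \<pi>0 :: "('s, 'a) policy" where "\<pi>0 = (\<lambda>h s w a. if a = amax h s then 1 else 0)"
  have pol0: "is_policy L0 H \<pi>0" for L0
    unfolding is_policy_def \<pi>0_def by auto
  have val0: "policy_value L0 H \<mu> P D \<pi>0 = M" for L0
  proof -
    have E: "cond_value L0 H \<mu> P \<pi>0 = (\<lambda>\<omega>. \<Sum>h\<in>{1..H}. \<Sum>s\<in>UNIV. \<Sum>a\<in>UNIV.
      (if a = amax h s then qd \<mu> P (h - 1) s else 0) * \<omega> h (s, a))"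
      unfolding cond_value_eq[OF ind pol0] by (intro ext sum.cong refl) (simp add: \<pi>0_def)
    have "policy_value L0 H \<mu> P D \<pi>0 = (\<Sum>h\<in>{1..H}. \<Sum>s\<in>UNIV. \<Sum>a\<in>UNIV.
      (if a = amax h s then qd \<mu> P (h - 1) s else 0) * r h (s, a))"
      unfolding policy_value_def E by (rule integral_lin(1)[OF D])
    also have "\<dots> = M" unfolding M_def'
    proof (intro sum.cong refl)
      fix h s
      have "(\<Sum>a\<in>UNIV. (if a = amax h s then qd \<mu> P (h - 1) s else 0) * r h (s, a))
         = (\<Sum>a\<in>UNIV. if a = amax h s then qd \<mu> P (h - 1) s * r h (s, a) else 0)"
        by (intro sum.cong refl) simp
      also have "\<dots> = qd \<mu> P (h - 1) s * m h s" by (simp add: amax)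
      finally show "(\<Sum>a\<in>UNIV. (if a = amax h s then qd \<mu> P (h - 1) s else 0) * r h (s, a))
         = qd \<mu> P (h - 1) s * m h s" .
    qed
    finally show ?thesis .
  qed
  show "ereal M \<le> opt_value L' H \<mu> P D"
    unfolding opt_value_def using pol0[of L'] val0[of L'] by (intro SUP_upper2[of \<pi>0]) auto
  have bnd: "policy_value L H \<mu> P D \<pi> \<le> real CARD('a) * M" if pol: "is_policy L H \<pi>" for \<pi>
  proof -
    define G :: "(nat \<Rightarrow> 's \<times> 'a \<Rightarrow> real) \<Rightarrow> real" where "G \<omega> = (\<Sum>h\<in>{1..H}. \<Sum>s\<in>UNIV. \<Sum>a\<in>UNIV. qd \<mu> P (h - 1) s * \<omega> h (s, a))" for \<omega>
    have intG: "integrable (PiM {1..H} D) G" unfolding G_def by (rule integral_lin(2)[OF D])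
    have "integral\<^sup>L (PiM {1..H} D) G = (\<Sum>h\<in>{1..H}. \<Sum>s\<in>UNIV. \<Sum>a\<in>UNIV. qd \<mu> P (h - 1) s * r h (s, a))"
      unfolding G_def by (rule integral_lin(1)[OF D])
    also have "\<dots> \<le> (\<Sum>h\<in>{1..H}. \<Sum>s\<in>UNIV. \<Sum>a\<in>(UNIV::'a set). qd \<mu> P (h - 1) s * m h s)"
      by (intro sum_mono mult_left_mono mge qd_nn) auto
    also have "\<dots> = real CARD('a) * M" unfolding M_def' by (simp add: sum_distrib_left mult_ac)
    finally have IG: "integral\<^sup>L (PiM {1..H} D) G \<le> real CARD('a) * M" .
    have AEnn: "AE \<omega> in PiM {1..H} D. \<forall>h\<in>{1..H}. \<forall>x. 0 \<le> \<omega> h x"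
      by (intro eventually_ball_finite ballI rd_PiM(1)[OF D]) auto
    have AEle: "AE \<omega> in PiM {1..H} D. cond_value L H \<mu> P \<pi> \<omega> \<le> G \<omega>"
      using AEnn
    proof eventually_elim
      case (elim \<omega>)
      show ?case unfolding cond_value_eq[OF ind pol] G_def
      proof (intro sum_mono)
        fix h s a assume h: "h \<in> {1..H}"
        have "\<pi> h s (restrict \<omega> (win L H h)) a * \<omega> h (s, a) \<le> 1 * \<omega> h (s, a)"
          using elim h pi_le1[OF pol h] by (intro mult_right_mono) auto
        then show "qd \<mu> P (h - 1) s * \<pi> h s (restrict \<omega> (win L H h)) a * \<omega> h (s, a) \<le> qd \<mu> P (h - 1) s * \<omega> h (s, a)"
          using mult_left_mono[OF _ qd_nn[OF h, of s]] by (simp add: mult.assoc)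
      qed
    qed
    show ?thesis
    proof (cases "integrable (PiM {1..H} D) (cond_value L H \<mu> P \<pi>)")
      case True
      have "policy_value L H \<mu> P D \<pi> \<le> integral\<^sup>L (PiM {1..H} D) G"
        unfolding policy_value_def by (rule integral_mono_AE[OF True intG AEle])
      then show ?thesis using IG by simp
    next
      case False
      then have "policy_value L H \<mu> P D \<pi> = 0" unfolding policy_value_def
        by (simp add: not_integrable_integral_eq)
      then show ?thesis using M_nn by simp
    qed
  qed
  show "opt_value L H \<mu> P D \<le> ereal (real CARD('a) * M)"
    unfolding opt_value_def using bnd by (intro SUP_least) auto
qed


lemma val0_D0:
  assumes pol: "is_policy 0 H \<pi>"
  shows "policy_value 0 H \<mu> P (D0 :: nat \<Rightarrow> ('s \<times> 'a \<Rightarrow> real) measure) \<pi> = real H / real CARD('a)"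
proof -
  have E: "cond_value 0 H \<mu> P \<pi> = (\<lambda>\<omega>. \<Sum>h\<in>{1..H}. \<Sum>s\<in>UNIV. \<Sum>a\<in>UNIV.
      (qd \<mu> P (h - 1) s * \<pi> h s (\<lambda>_. undefined) a) * \<omega> h (s, a))"
    unfolding cond_value_eq[OF ind pol] by (intro ext sum.cong refl) (simp add: win_def restrict_def)
  have "policy_value 0 H \<mu> P (D0 :: nat \<Rightarrow> ('s \<times> 'a \<Rightarrow> real) measure) \<pi> = (\<Sum>h\<in>{1..H}. \<Sum>s\<in>UNIV. \<Sum>a\<in>UNIV.
      (qd \<mu> P (h - 1) s * \<pi> h s (\<lambda>_. undefined) a) * (1 / real CARD('a)))"
    unfolding policy_value_def E by (rule integral_lin(1)[OF D0_rd])
  also have "\<dots> = (\<Sum>h\<in>{1..H}. \<Sum>s\<in>UNIV. qd \<mu> P (h - 1) s * (\<Sum>a\<in>UNIV. \<pi> h s (\<lambda>_. undefined) a) / real CARD('a))"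
    by (simp add: sum_distrib_left sum_divide_distrib)
  also have "\<dots> = (\<Sum>h\<in>{1..H}. (\<Sum>s\<in>UNIV. qd \<mu> P (h - 1) s) / real CARD('a))"
  proof (intro sum.cong refl)
    fix h assume h: "h \<in> {1..H}"
    have "(\<Sum>a\<in>UNIV. \<pi> h s (\<lambda>_. undefined) a) = 1" for s using pol h unfolding is_policy_def by blast
    then show "(\<Sum>s\<in>UNIV. qd \<mu> P (h - 1) s * (\<Sum>a\<in>UNIV. \<pi> h s (\<lambda>_. undefined) a) / real CARD('a)) =
      (\<Sum>s\<in>UNIV. qd \<mu> P (h - 1) s) / real CARD('a)" by (simp add: sum_divide_distrib)
  qed
  also have "\<dots> = (\<Sum>h\<in>{1..H}. 1 / real CARD('a))"
    by (intro sum.cong refl) (simp only: qd_sum)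
  also have "\<dots> = real H / real CARD('a)" by simp
  finally show ?thesis .
qed

lemma opt0_D0: "opt_value 0 H \<mu> P (D0 :: nat \<Rightarrow> ('s \<times> 'a \<Rightarrow> real) measure) \<le> ereal (real H / real CARD('a))"
  unfolding opt_value_def using val0_D0 by (intro SUP_least) auto


lemma optL_D0:
  assumes L: "L \<in> {1..H}"
  shows "ereal (real H) \<le> opt_value L H \<mu> P (D0 :: nat \<Rightarrow> ('s \<times> 'a \<Rightarrow> real) measure)"
proof -
  define F :: "('s \<times> 'a \<Rightarrow> real) \<Rightarrow> 's \<Rightarrow> 'a \<Rightarrow> real" where
    "F \<rho> s a = (if (\<Sum>a'\<in>UNIV. \<bar>\<rho> (s, a')\<bar>) = 0 then 1 / real CARD('a)
       else \<bar>\<rho> (s, a)\<bar> / (\<Sum>a'\<in>UNIV. \<bar>\<rho> (s, a')\<bar>))" for \<rho> s a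
  define \<pi>L :: "('s, 'a) policy" where "\<pi>L = (\<lambda>h s w a. F (w h) s a)"
  have hw: "h \<in> win L H h" if "h \<in> {1..H}" for h using L that unfolding win_def by auto
  have pol: "is_policy L H \<pi>L"
    unfolding is_policy_def
  proof (intro ballI allI conjI)
    fix h s w a assume h: "h \<in> {1..H}"
    show "0 \<le> \<pi>L h s w a" unfolding \<pi>L_def F_def by (auto intro!: divide_nonneg_nonneg sum_nonneg)
  next
    fix h s w assume h: "h \<in> {1..H}"
    show "(\<Sum>a\<in>UNIV. \<pi>L h s w a) = 1"
    proof (cases "(\<Sum>a'\<in>UNIV. \<bar>w h (s, a')\<bar>) = 0")
      case True then show ?thesis unfolding \<pi>L_def F_def by simp
    next
      case False then show ?thesis unfolding \<pi>L_def F_def by (simp add: sum_divide_distrib[symmetric])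
    qed
  next
    fix h s a assume h: "h \<in> {1..H}"
    have [measurable]: "(\<lambda>w. w h) \<in> measurable (PiM (win L H h) (\<lambda>_. rew_space)) rew_space"
      by (rule measurable_component_singleton[OF hw[OF h]])
    have [measurable]: "(\<lambda>\<rho>. \<rho> x) \<in> borel_measurable (rew_space :: ('s \<times> 'a \<Rightarrow> real) measure)" for x
      unfolding rew_space_def by (rule measurable_component_singleton) simp
    show "(\<lambda>w. \<pi>L h s w a) \<in> borel_measurable (PiM (win L H h) (\<lambda>_. rew_space))"
      unfolding \<pi>L_def F_def by measurable
  qed
  define \<Phi> where "\<Phi> \<omega> = (\<Sum>h\<in>{1..H}. \<Sum>s\<in>UNIV. \<Sum>a\<in>UNIV. qd \<mu> P (h - 1) s * F (\<omega> h) s a * \<omega> h (s, a))"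
    for \<omega> :: "nat \<Rightarrow> 's \<times> 'a \<Rightarrow> real"
  have E: "cond_value L H \<mu> P \<pi>L = \<Phi>"
    unfolding cond_value_eq[OF ind pol] \<Phi>_def
    by (intro ext sum.cong refl) (simp add: \<pi>L_def hw)
  let ?M = "PiM {1..H} (D0 :: nat \<Rightarrow> ('s \<times> 'a \<Rightarrow> real) measure)"
  have mPhi: "\<Phi> \<in> borel_measurable ?M"
    unfolding \<Phi>_def
  proof (intro borel_measurable_sum)
    fix h s a assume h: "h \<in> {1..H}"
    have [measurable]: "(\<lambda>\<omega>. \<omega> h x) \<in> borel_measurable ?M" for x
      by (rule rd_proj_meas[OF D0_rd h])
    show "(\<lambda>\<omega>. qd \<mu> P (h - 1) s * F (\<omega> h) s a * \<omega> h (s, a)) \<in> borel_measurable ?M"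
      unfolding F_def by measurable
  qed
  have ps: "\<And>i. i \<in> {1..H} \<Longrightarrow> prob_space ((D0 :: nat \<Rightarrow> ('s \<times> 'a \<Rightarrow> real) measure) i)"
    using D0_rd unfolding reward_dists_def by blast
  have AEev: "AE \<rho> in (D0 h :: ('s \<times> 'a \<Rightarrow> real) measure). \<rho> \<in> range ev" for h
  proof -
    have S: "{x \<in> space rew_space. x \<in> range ev} \<in> sets (rew_space :: ('s \<times> 'a \<Rightarrow> real) measure)"
    proof -
      have "Measurable.pred rew_space (\<lambda>x::'s \<times> 'a \<Rightarrow> real. \<exists>b\<in>UNIV. \<forall>y\<in>UNIV. x y = ev b y)"
        unfolding rew_space_def by measurable
      moreover have "(x \<in> range ev) = (\<exists>b\<in>UNIV. \<forall>y\<in>UNIV. x y = ev b y)" for x :: "'s \<times> 'a \<Rightarrow> real"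
        by (auto simp: fun_eq_iff)
      ultimately show ?thesis by (simp add: pred_def)
    qed
    show ?thesis unfolding D0_def using AE_distr_iff[OF ev_meas S] by simp
  qed
  have AE: "AE \<omega> in ?M. \<forall>h\<in>{1..H}. \<omega> h \<in> range ev"
    by (intro eventually_ball_finite ballI AE_PiM_component[of "{1..H}" D0, OF ps _ AEev]) auto
  have "AE \<omega> in ?M. \<Phi> \<omega> = real H"
    using AE
  proof eventually_elim
    case (elim \<omega>)
    have "\<Phi> \<omega> = (\<Sum>h\<in>{1..H}. \<Sum>s\<in>UNIV. qd \<mu> P (h - 1) s)"
      unfolding \<Phi>_def
    proof (intro sum.cong refl)
      fix h and s :: 's assume h: "h \<in> {1..H}"
      have "\<omega> h \<in> range ev" using elim h by blast
      then obtain b where b: "\<omega> h = ev b" by blast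
      have s1: "(\<Sum>a'\<in>UNIV. \<bar>ev b (s, a')\<bar>) = (1::real)" by (simp add: ev_def)
      have Fa: "F (\<omega> h) s a * \<omega> h (s, a) = (if a = b then 1 else 0)" for a
        unfolding b F_def s1 by (simp add: ev_def)
      have "(\<Sum>a\<in>UNIV. qd \<mu> P (h - 1) s * F (\<omega> h) s a * \<omega> h (s, a))
          = (\<Sum>a\<in>UNIV. if a = b then qd \<mu> P (h - 1) s else 0)"
        by (intro sum.cong refl) (simp add: mult.assoc Fa)
      then show "(\<Sum>a\<in>UNIV. qd \<mu> P (h - 1) s * F (\<omega> h) s a * \<omega> h (s, a)) = qd \<mu> P (h - 1) s"
        by simp
    qed
    also have "\<dots> = (\<Sum>h\<in>{1..H}. 1)" by (intro sum.cong refl) (simp only: qd_sum)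
    also have "\<dots> = real H" by simp
    finally show ?case .
  qed
  then have "integral\<^sup>L ?M \<Phi> = integral\<^sup>L ?M (\<lambda>_. real H)"
    by (intro integral_cong_AE mPhi) auto
  also have "\<dots> = real H"
  proof -
    interpret prob_space ?M by (rule prob_space_PiM[OF ps])
    show ?thesis using prob_space by simp
  qed
  finally have "policy_value L H \<mu> P D0 \<pi>L = real H" unfolding policy_value_def E .
  then show ?thesis unfolding opt_value_def using pol by (intro SUP_upper2[of \<pi>L]) auto
qed

end

lemma ereal_lb:
  fixes A M :: real and V0 VL :: ereal
  assumes A: "0 < A" and M: "0 \<le> M" and h0: "ereal M \<le> V0" and h1: "ereal M \<le> VL" and h2: "VL \<le> ereal (A * M)"
  shows "ereal (1 / A) \<le> cr_div V0 VL"
proof (cases "VL = 0")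
  case True then show ?thesis by (simp add: cr_div_def)
next
  case False
  obtain v where v: "VL = ereal v" using h1 h2 by (cases VL) auto
  have vM: "M \<le> v" "v \<le> A * M" using h1 h2 v by auto
  have vpos: "0 < v" using False v vM M by auto
  show ?thesis
  proof (cases V0)
    case (real u)
    have uM: "M \<le> u" using h0 real by auto
    have "1 / A \<le> u / v"
    proof -
      have "v \<le> A * u" using vM uM A by (meson less_eq_real_def mult_left_mono order_trans)
      then show ?thesis using A vpos by (simp add: field_simps)
    qed
    then show ?thesis using False v real vpos by (simp add: cr_div_def)
  next
    case PInf then show ?thesis using False v vpos by (simp add: cr_div_def)
  next
    case MInf then show ?thesis using h0 by simp
  qed
qed

lemma ereal_ub:
  fixes A X c d :: real and V0 VL :: ereal
  assumes A: "0 < A" and X: "0 < X" and h0: "V0 \<le> ereal (X / A)" and h1: "ereal c \<le> V0"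
    and h2: "ereal X \<le> VL" and h3: "VL \<le> ereal d"
  shows "cr_div V0 VL \<le> ereal (1 / A)"
proof -
  obtain v where v: "VL = ereal v" using h2 h3 by (cases VL) auto
  obtain u where u: "V0 = ereal u" using h0 h1 by (cases V0) auto
  have vX: "X \<le> v" using h2 v by auto
  have uX: "u \<le> X / A" using h0 u by auto
  have vpos: "0 < v" using vX X by auto
  have "u / v \<le> 1 / A"
  proof (cases "u \<le> 0")
    case True then show ?thesis using vpos A by (meson divide_nonpos_pos dual_order.trans less_eq_real_def zero_le_divide_1_iff)
  next
    case False
    have "u / v \<le> u / X" using False vX X by (intro divide_left_mono) auto
    also have "\<dots> \<le> (X / A) / X" using uX X by (intro divide_right_mono) auto
    also have "\<dots> = 1 / A" using X by simp
    finally show ?thesis .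
  qed
  then show ?thesis using u v vpos by (simp add: cr_div_def)
qed

theorem mainTheorem7:
  fixes \<mu> :: "'s::finite \<Rightarrow> real"
    and P :: "nat \<Rightarrow> 's \<Rightarrow> 'a::finite \<Rightarrow> 's \<Rightarrow> real"
    and H L :: nat
  assumes mu_dist: "(\<forall>s. 0 \<le> \<mu> s) \<and> (\<Sum>s\<in>UNIV. \<mu> s) = 1"
    and P_dist: "\<forall>h\<in>{1..H}. \<forall>s a. (\<forall>s'. 0 \<le> P h s a s') \<and> (\<Sum>s'\<in>UNIV. P h s a s') = 1"
    and P_action_indep: "\<forall>h\<in>{1..H}. \<forall>s a a' s'. P h s a s' = P h s a' s'"
    and L_range: "L \<in> {1..H}"
  shows "CR L H \<mu> P = ereal (1 / real CARD('a))"
proof -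
  have Apos: "0 < real CARD('a)" by simp
  have lb: "ereal (1 / real CARD('a)) \<le> CR_r L H \<mu> P r"
    if r: "\<forall>h\<in>{1..H}. \<forall>x. 0 \<le> r h x \<and> r h x \<le> 1" for r
    unfolding CR_r_def
  proof (rule INF_greatest)
    fix D assume D: "D \<in> reward_dists H r"
    show "ereal (1 / real CARD('a)) \<le> cr_div (opt_value 0 H \<mu> P D) (opt_value L H \<mu> P D)"
      by (rule ereal_lb[OF Apos part_a(1)[OF mu_dist P_dist P_action_indep D r]
            part_a(2)[OF mu_dist P_dist P_action_indep D r] part_a(2)[OF mu_dist P_dist P_action_indep D r]
            part_a(3)[OF mu_dist P_dist P_action_indep D r]])
  qed
  define r0 :: "nat \<Rightarrow> 's \<times> 'a \<Rightarrow> real" where "r0 = (\<lambda>h x. 1 / real CARD('a))"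
  have r0: "\<forall>h\<in>{1..H}. \<forall>x. 0 \<le> r0 h x \<and> r0 h x \<le> 1" unfolding r0_def by simp
  have D0r: "(D0 :: nat \<Rightarrow> ('s \<times> 'a \<Rightarrow> real) measure) \<in> reward_dists H r0"
    unfolding r0_def by (rule D0_rd)
  have Hpos: "0 < real H" using L_range by auto
  have ub: "CR_r L H \<mu> P r0 \<le> ereal (1 / real CARD('a))"
    unfolding CR_r_def
  proof (rule INF_lower2[OF D0r])
    show "cr_div (opt_value 0 H \<mu> P D0) (opt_value L H \<mu> P D0) \<le> ereal (1 / real CARD('a))"
      by (rule ereal_ub[OF Apos Hpos opt0_D0[OF mu_dist P_dist P_action_indep]
          part_a(2)[OF mu_dist P_dist P_action_indep D0r r0]
          optL_D0[OF mu_dist P_dist P_action_indep L_range]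
          part_a(3)[OF mu_dist P_dist P_action_indep D0r r0]])
  qed
  show ?thesis unfolding CR_def
  proof (rule antisym)
    show "(INF r\<in>{r. \<forall>h\<in>{1..H}. \<forall>x. 0 \<le> r h x \<and> r h x \<le> 1}. CR_r L H \<mu> P r) \<le> ereal (1 / real CARD('a))"
      using r0 ub by (intro INF_lower2[of r0]) auto
    show "ereal (1 / real CARD('a)) \<le> (INF r\<in>{r. \<forall>h\<in>{1..H}. \<forall>x. 0 \<le> r h x \<and> r h x \<le> 1}. CR_r L H \<mu> P r)"
      using lb by (intro INF_greatest) auto
  qed
qed

end
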